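(* Let $s_+,s_-\in\mathbb{R}^2$ be distinct, and let $\mathcal{C}_{s_+,s_-}=\{x\mapsto\mathrm{sign}(w^\top x-b): w\in\mathbb{R}^2,\ b\in\mathbb{R},\ w^\top s_+\ge b> w^\top s_-\}$ be the class of two-dimensional $\{(s_+,+1),(s_-,-1)\}$-halfspaces on $\mathcal{X}=\mathbb{R}^2$. Then $(\mathcal{C}_{s_+,s_-},\mathbb{R}^2)$ has certificate dimension $3$ with parameters $m=7$ and $n=3$.
   Context: $\mathrm{sign}(z)=+1$ if $z\ge0$ and $-1$ if $z<0$. Notation: $\mathcal{L}=\mathcal{X}\times\{\pm1\}$; $\mathcal{P}_n(\mathcal{L})$ = $n$-element subsets of $\mathcal{L}$. For finite $S\subseteq\mathcal{L}$, $\mathcal{V}(S)=\{h\in\mathcal{C}: h(x)=y\ \forall (x,y)\in S\}$ (with $\mathcal{C}$ the class under consideration). A set of labeled examples is "labeled by $h$" if $y=h(x)$ for each of its elements. Certificate dimension: $(\mathcal{C},\mathcal{X})$ has certificate dimension $k$ with parameters $(m,n)$ (integers $m,n\ge1$) if there is a function $\sigma:\mathcal{C}\times\mathcal{P}_{k-1}(\mathcal{L})\to\{0,1,\dots,n-1\}$ such that for every $h\in\mathcal{C}$ and every $S\subseteq\mathcal{L}$ with $|S|=m$ labeled by $h$, there exist $U\subseteq S$ with $|U|=k$ and $(x,y)\in U$ such that for every $h'\in\mathcal{V}(S\setminus\{(x,y)\})$: $\sigma(h',U\setminus\{(x,y)\})=\sigma(h,U\setminus\{(x,y)\})\Rightarrow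 h'(x)=h(x)=y$. *)

theory Defs
  imports "HOL-Analysis.Analysis"
begin

definition sign :: "real \<Rightarrow> int" where
  "sign z = (if z \<ge> 0 then 1 else -1)"

definition labeled_space :: "'x set \<Rightarrow> ('x \<times> int) set" where
  "labeled_space X = X \<times> {1, -1}"

definition labeled_by :: "('x \<Rightarrow> int) \<Rightarrow> ('x \<times> int) set \<Rightarrow> bool" where
  "labeled_by h S \<longleftrightarrow> (\<forall>(x, y)\<in>S. y = h x)"

definition version_space :: "('x \<Rightarrow> int) set \<Rightarrow> ('x \<times> int) set \<Rightarrow> ('x \<Rightarrow> int) set" where
  "version_space C S = {h \<in> C. \<forall>(x, y)\<in>S. h x = y}"

definition has_certificate_dimension ::
  "('x \<Rightarrow> int) set \<Rightarrow> 'x set \<Rightarrow> nat \<Rightarrow> nat \<Rightarrow> nat \<Rightarrow> bool" where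
  "has_certificate_dimension C X k m n \<longleftrightarrow>
     1 \<le> m \<and> 1 \<le> n \<and>
     (\<exists>\<sigma> :: ('x \<Rightarrow> int) \<Rightarrow> ('x \<times> int) set \<Rightarrow> nat.
        (\<forall>h\<in>C. \<forall>U. U \<subseteq> labeled_space X \<and> finite U \<and> card U = k - 1 \<longrightarrow> \<sigma> h U < n) \<and>
        (\<forall>h\<in>C. \<forall>S. S \<subseteq> labeled_space X \<and> finite S \<and> card S = m \<and> labeled_by h S \<longrightarrow>
           (\<exists>U. U \<subseteq> S \<and> card U = k \<and>
              (\<exists>(x, y)\<in>U. \<forall>h'\<in>version_space C (S - {(x, y)}).
                  \<sigma> h' (U - {(x, y)}) = \<sigma> h (U - {(x, y)}) \<longrightarrow> h' x = h x \<and> h x = y))))"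

definition halfspaces2 :: "real^2 \<Rightarrow> real^2 \<Rightarrow> (real^2 \<Rightarrow> int) set" where
  "halfspaces2 sp sm =
     {(\<lambda>x. sign (w \<bullet> x - b)) | w b. w \<bullet> sp \<ge> b \<and> b > w \<bullet> sm}"

end

theory Submission
  imports Defs
begin


definition cr :: "real^2 \<Rightarrow> real^2 \<Rightarrow> real" where
  "cr u v = u$1 * v$2 - u$2 * v$1"

lemma inner2: "(u::real^2) \<bullet> v = u$1 * v$1 + u$2 * v$2"
  by (simp add: inner_vec_def sum_2)

lemma vec2_eq: "((u::real^2) = v) \<longleftrightarrow> u$1 = v$1 \<and> u$2 = v$2"
  by (simp add: vec_eq_iff forall_2)

lemma cramer: "cr a c *\<^sub>R b = cr b c *\<^sub>R a + cr a b *\<^sub>R c"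
  by (simp add: vec2_eq cr_def algebra_simps)

lemma key_diff:
  "cr w v * (w \<bullet> u) - cr w u * (w \<bullet> v) = (w \<bullet> w) * cr u v"
  by (simp add: inner2 cr_def algebra_simps)

lemma collin:
  "(w \<bullet> u) *\<^sub>R v - (w \<bullet> v) *\<^sub>R u = cr u v *\<^sub>R (vector [- (w$2), w$1] :: real^2)"
  by (simp add: vec2_eq inner2 cr_def algebra_simps vector_def)



lemma sort4:
  fixes k :: "'a \<Rightarrow> real"
  assumes "finite P" "card P = 4" "inj_on k P"
  shows "\<exists>q1 q2 q3 q4. P = {q1,q2,q3,q4} \<and> k q1 < k q2 \<and> k q2 < k q3 \<and> k q3 < k q4"
proof -
  obtain xs where xs: "set xs = P" "distinct xs" using finite_distinct_list[OF assms(1)] by blast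
  define ys where "ys = sort_key k xs"
  have sy: "set ys = P" using xs by (simp add: ys_def)
  have dy: "distinct ys" using xs by (simp add: ys_def)
  have so: "sorted (map k ys)" by (simp add: ys_def)
  have dm: "distinct (map k ys)" using dy assms(3) sy by (simp add: distinct_map)
  have ly: "length ys = 4" using distinct_card[OF dy] sy assms(2) by simp
  have st: "sorted_wrt (<) (map k ys)" using so dm strict_sorted_iff by blast
  obtain q1 q2 q3 q4 where "ys = [q1,q2,q3,q4]"
    using ly by (cases ys; cases "tl ys"; cases "tl (tl ys)"; cases "tl (tl (tl ys))"; auto)
  then show ?thesis using st sy by auto
qed

lemma crpos:
  assumes "w \<bullet> u > 0" "w \<bullet> v > 0" "cr w u / (w \<bullet> u) < cr w v / (w \<bullet> v)"
  shows "cr u v > 0"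
proof -
  have w0: "w \<noteq> 0" using assms(1) by auto
  have "cr w u * (w \<bullet> v) < cr w v * (w \<bullet> u)"
    using assms by (simp add: divide_simps mult.commute)
  then have "(w \<bullet> w) * cr u v > 0" using key_diff[of w v u] by linarith
  moreover have "w \<bullet> w > 0" using w0 by simp
  ultimately show ?thesis by (simp add: zero_less_mult_iff)
qed

lemma triple:
  assumes A: "cr ra rb > 0" and B: "cr rb rc > 0" and C: "cr ra rc > 0"
  shows "(cr ra rb + cr rb rc - cr ra rc \<ge> 0 \<longrightarrow>
            (\<exists>\<alpha> \<gamma>. \<alpha>\<ge>0 \<and> \<gamma>\<ge>0 \<and> \<alpha>+\<gamma>\<ge>1 \<and> rb = \<alpha> *\<^sub>R ra + \<gamma> *\<^sub>R rc))
       \<and> (cr ra rb + cr rb rc - cr ra rc \<le> 0 \<longrightarrow>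
            (\<exists>\<beta> \<mu>. \<beta>\<ge>0 \<and> \<mu>\<ge>0 \<and> rc - rb = \<beta> *\<^sub>R rb + \<mu> *\<^sub>R (rb - ra)) \<and>
            (\<exists>\<beta> \<mu>. \<beta>\<ge>0 \<and> \<mu>\<ge>0 \<and> ra - rb = \<beta> *\<^sub>R rb + \<mu> *\<^sub>R (rb - rc)))"
proof (intro conjI impI)
  define a where "a = cr ra rb"
  define b where "b = cr rb rc"
  define c where "c = cr ra rc"
  note defs = a_def b_def c_def
  have ap: "a > 0" and bp: "b > 0" and cp: "c > 0" using A B C defs by simp_all
  have cram: "c *\<^sub>R rb = b *\<^sub>R ra + a *\<^sub>R rc" unfolding defs by (rule cramer)
  {
    assume "cr ra rb + cr rb rc - cr ra rc \<ge> 0"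
    then have d: "a + b \<ge> c" unfolding defs by simp
    have "rb = (1/c) *\<^sub>R (c *\<^sub>R rb)" using C defs by simp
    also have "\<dots> = (b/c) *\<^sub>R ra + (a/c) *\<^sub>R rc" unfolding cram by (simp add: scaleR_add_right)
    finally have e: "rb = (b/c) *\<^sub>R ra + (a/c) *\<^sub>R rc" .
    have "b/c + a/c \<ge> 1" using d C defs by (simp add: divide_simps)
    then show "\<exists>\<alpha> \<gamma>. \<alpha>\<ge>0 \<and> \<gamma>\<ge>0 \<and> \<alpha>+\<gamma>\<ge>1 \<and> rb = \<alpha> *\<^sub>R ra + \<gamma> *\<^sub>R rc"
      using e ap bp cp by (intro exI[of _ "b/c"] exI[of _ "a/c"]) simp
  }
  {
    assume d00: "cr ra rb + cr rb rc - cr ra rc \<le> 0"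
    then have d0: "c - a - b \<ge> 0" using defs by simp
    have id1: "a *\<^sub>R (rc - rb) = (c - a - b) *\<^sub>R rb + b *\<^sub>R (rb - ra)"
      unfolding defs by (simp add: vec2_eq cr_def algebra_simps)
    have "rc - rb = (1/a) *\<^sub>R (a *\<^sub>R (rc - rb))" using A defs by simp
    also have "\<dots> = ((c - a - b)/a) *\<^sub>R rb + (b/a) *\<^sub>R (rb - ra)"
      unfolding id1 by (simp add: scaleR_add_right)
    finally show "\<exists>\<beta> \<mu>. \<beta>\<ge>0 \<and> \<mu>\<ge>0 \<and> rc - rb = \<beta> *\<^sub>R rb + \<mu> *\<^sub>R (rb - ra)"
      using d0 ap bp by (intro exI[of _ "(c - a - b)/a"] exI[of _ "b/a"]) (simp add: divide_simps)
    have id2: "b *\<^sub>R (ra - rb) = (c - a - b) *\<^sub>R rb + a *\<^sub>R (rb - rc)"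
      unfolding defs by (simp add: vec2_eq cr_def algebra_simps)
    have "ra - rb = (1/b) *\<^sub>R (b *\<^sub>R (ra - rb))" using B defs by simp
    also have "\<dots> = ((c - a - b)/b) *\<^sub>R rb + (a/b) *\<^sub>R (rb - rc)"
      unfolding id2 by (simp add: scaleR_add_right)
    finally show "\<exists>\<beta> \<mu>. \<beta>\<ge>0 \<and> \<mu>\<ge>0 \<and> ra - rb = \<beta> *\<^sub>R rb + \<mu> *\<^sub>R (rb - rc)"
      using d0 ap bp by (intro exI[of _ "(c - a - b)/b"] exI[of _ "a/b"]) (simp add: divide_simps)
  }
qed



definition certT where
  "certT s x a c \<longleftrightarrow> (\<exists>\<alpha> \<gamma>. \<alpha>\<ge>0 \<and> \<gamma>\<ge>0 \<and> \<alpha>+\<gamma>\<ge>1 \<and> x - s = \<alpha> *\<^sub>R (a - s) + \<gamma> *\<^sub>R (c - s))"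

definition certC where
  "certC w0 s x a c \<longleftrightarrow> (\<exists>\<beta> \<mu>. \<beta>\<ge>0 \<and> \<mu>\<ge>0 \<and> w0 \<bullet> (a - c) \<ge> 0 \<and> x - a = \<beta> *\<^sub>R (a - s) + \<mu> *\<^sub>R (a - c))"

lemma core:
  fixes s w0 :: "real^2" and P :: "(real^2) set"
  assumes card: "card P = 4" and pos: "\<forall>q\<in>P. w0 \<bullet> (q - s) > 0"
  shows "\<exists>x a c. x\<in>P \<and> a\<in>P \<and> c\<in>P \<and> x\<noteq>a \<and> x\<noteq>c \<and> a\<noteq>c \<and>
           (certT s x a c \<or> certC w0 s x a c)"
proof -
  have fin: "finite P" using card by (metis card.infinite zero_neq_numeral)
  define k where "k u = cr w0 (u - s) / (w0 \<bullet> (u - s))" for u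
  show ?thesis
  proof (cases "inj_on k P")
    case False
    then obtain u v where uv: "u \<in> P" "v \<in> P" "u \<noteq> v" "k u = k v"
      unfolding inj_on_def by blast
    define du where "du = w0 \<bullet> (u - s)"
    define dv where "dv = w0 \<bullet> (v - s)"
    have dup: "du > 0" and dvp: "dv > 0" using pos uv by (auto simp: du_def dv_def)
    have "w0 \<noteq> 0" using dup du_def by auto
    then have ww: "w0 \<bullet> w0 > 0" by simp
    have "cr w0 (v - s) * du = cr w0 (u - s) * dv"
      using uv(4) dup dvp unfolding k_def du_def[symmetric] dv_def[symmetric]
      by (simp add: divide_simps)
    then have "(w0 \<bullet> w0) * cr (u - s) (v - s) = 0"
      using key_diff[of w0 "v - s" "u - s"] unfolding du_def dv_def by linarith
    then have cr0: "cr (u - s) (v - s) = 0" using ww by simp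
    have "du *\<^sub>R (v - s) - dv *\<^sub>R (u - s) = 0"
      using collin[of w0 "u - s" "v - s"] cr0 unfolding du_def dv_def by simp
    then have eq: "du *\<^sub>R (v - s) = dv *\<^sub>R (u - s)" by simp
    obtain c where c: "c \<in> P" "c \<noteq> u" "c \<noteq> v"
    proof -
      have "card (P - {u, v}) = 2" using card uv fin by (simp add: card_Diff_subset)
      then have "P - {u, v} \<noteq> {}" by (metis card.empty zero_neq_numeral)
      then show ?thesis using that by blast
    qed
    show ?thesis
    proof (cases "dv \<ge> du")
      case True
      have "v - s = (dv/du) *\<^sub>R (u - s)"
        using eq dup by (metis (no_types, lifting) divide_inverse_commute nonzero_mult_div_cancel_left
              order_less_irrefl scaleR_scaleR mult.commute scaleR_one inverse_eq_divide
              divide_self_if)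
      then have "certT s v u c" unfolding certT_def using True dup
        by (intro exI[of _ "dv/du"] exI[of _ 0]) simp
      then show ?thesis using uv c by blast
    next
      case False
      have "u - s = (du/dv) *\<^sub>R (v - s)"
        using eq dvp by (metis (no_types, lifting) divide_inverse_commute nonzero_mult_div_cancel_left
              order_less_irrefl scaleR_scaleR mult.commute scaleR_one inverse_eq_divide
              divide_self_if)
      then have "certT s u v c" unfolding certT_def using False dvp
        by (intro exI[of _ "du/dv"] exI[of _ 0]) simp
      then show ?thesis using uv c by blast
    qed
  next
    case True
    obtain q1 q2 q3 q4 where q: "P = {q1,q2,q3,q4}" "k q1 < k q2" "k q2 < k q3" "k q3 < k q4"
      using sort4[OF fin card True] by blast
    have inP: "q1 \<in> P" "q2 \<in> P" "q3 \<in> P" "q4 \<in> P" using q(1) by auto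
    have cp: "cr (a - s) (b - s) > 0" if "a \<in> P" "b \<in> P" "k a < k b" for a b
      using crpos[of w0 "a - s" "b - s"] pos that unfolding k_def by auto
    have c12: "cr (q1 - s) (q2 - s) > 0" using cp inP q by blast
    have c23: "cr (q2 - s) (q3 - s) > 0" using cp inP q by blast
    have c34: "cr (q3 - s) (q4 - s) > 0" using cp inP q by blast
    have c13: "cr (q1 - s) (q3 - s) > 0" using cp inP q by (meson order.strict_trans)
    have c24: "cr (q2 - s) (q4 - s) > 0" using cp inP q by (meson order.strict_trans)
    have ne: "q1 \<noteq> q2" "q1 \<noteq> q3" "q1 \<noteq> q4" "q2 \<noteq> q3" "q2 \<noteq> q4" "q3 \<noteq> q4"
      using q by auto
    note t123 = triple[OF c12 c23 c13]
    note t234 = triple[OF c23 c34 c24]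
    show ?thesis
    proof (cases "cr (q1 - s) (q2 - s) + cr (q2 - s) (q3 - s) - cr (q1 - s) (q3 - s) \<ge> 0")
      case True
      then obtain \<alpha> \<gamma> where "\<alpha>\<ge>0" "\<gamma>\<ge>0" "\<alpha>+\<gamma>\<ge>1" "q2 - s = \<alpha> *\<^sub>R (q1 - s) + \<gamma> *\<^sub>R (q3 - s)"
        using t123 by blast
      then have "certT s q2 q1 q3" unfolding certT_def by blast
      then show ?thesis using inP ne by blast
    next
      case F1: False
      show ?thesis
      proof (cases "cr (q2 - s) (q3 - s) + cr (q3 - s) (q4 - s) - cr (q2 - s) (q4 - s) \<ge> 0")
        case True
        then obtain \<alpha> \<gamma> where "\<alpha>\<ge>0" "\<gamma>\<ge>0" "\<alpha>+\<gamma>\<ge>1" "q3 - s = \<alpha> *\<^sub>R (q2 - s) + \<gamma> *\<^sub>R (q4 - s)"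
          using t234 by blast
        then have "certT s q3 q2 q4" unfolding certT_def by blast
        then show ?thesis using inP ne by blast
      next
        case F2: False
        show ?thesis
        proof (cases "w0 \<bullet> (q3 - q2) \<ge> 0")
          case True
          obtain \<beta> \<mu> where "\<beta>\<ge>0" "\<mu>\<ge>0" "(q4 - s) - (q3 - s) = \<beta> *\<^sub>R (q3 - s) + \<mu> *\<^sub>R ((q3 - s) - (q2 - s))"
            using t234 F2 by auto
          then have "q4 - q3 = \<beta> *\<^sub>R (q3 - s) + \<mu> *\<^sub>R (q3 - q2)" by simp
          then have "certC w0 s q4 q3 q2" unfolding certC_def using True \<open>\<beta>\<ge>0\<close> \<open>\<mu>\<ge>0\<close> by blast
          then show ?thesis using inP ne by blast
        next
          case False
          obtain \<beta> \<mu> where "\<beta>\<ge>0" "\<mu>\<ge>0" "(q1 - s) - (q2 - s) = \<beta> *\<^sub>R (q2 - s) + \<mu> *\<^sub>R ((q2 - s) - (q3 - s))"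
            using t123 F1 by auto
          then have "q1 - q2 = \<beta> *\<^sub>R (q2 - s) + \<mu> *\<^sub>R (q2 - q3)" by simp
          moreover have "w0 \<bullet> (q2 - q3) \<ge> 0" using False by (simp add: inner_diff_right)
          ultimately have "certC w0 s q1 q2 q3" unfolding certC_def using \<open>\<beta>\<ge>0\<close> \<open>\<mu>\<ge>0\<close> by blast
          then show ?thesis using inP ne by blast
        qed
      qed
    qed
  qed
qed



definition rep :: "real^2 \<Rightarrow> real^2 \<Rightarrow> (real^2 \<Rightarrow> int) \<Rightarrow> (real^2) \<times> real" where
  "rep sp sm h = (SOME p. fst p \<bullet> sp \<ge> snd p \<and> snd p > fst p \<bullet> sm \<and> h = (\<lambda>x. sign (fst p \<bullet> x - snd p)))"

definition fv :: "real^2 \<Rightarrow> real^2 \<Rightarrow> (real^2 \<Rightarrow> int) \<Rightarrow> real^2 \<Rightarrow> real" where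
  "fv sp sm h x = fst (rep sp sm h) \<bullet> x - snd (rep sp sm h)"

definition lexless :: "real^2 \<Rightarrow> real^2 \<Rightarrow> bool" where
  "lexless a c \<longleftrightarrow> a$1 < c$1 \<or> (a$1 = c$1 \<and> a$2 < c$2)"

definition sig :: "real^2 \<Rightarrow> real^2 \<Rightarrow> (real^2 \<Rightarrow> int) \<Rightarrow> ((real^2) \<times> int) set \<Rightarrow> nat" where
  "sig sp sm h U =
    (if \<exists>p\<in>U. \<exists>q\<in>U. lexless (fst p) (fst q) \<and> fv sp sm h (fst p) < fv sp sm h (fst q) then 0
     else if \<exists>p\<in>U. \<exists>q\<in>U. lexless (fst p) (fst q) \<and> fv sp sm h (fst q) < fv sp sm h (fst p) then 1
     else 2)"

lemma rep_prop:
  assumes "h \<in> halfspaces2 sp sm"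
  shows "fst (rep sp sm h) \<bullet> sp \<ge> snd (rep sp sm h) \<and> snd (rep sp sm h) > fst (rep sp sm h) \<bullet> sm
         \<and> h = (\<lambda>x. sign (fst (rep sp sm h) \<bullet> x - snd (rep sp sm h)))"
proof -
  obtain w b where "w \<bullet> sp \<ge> b" "b > w \<bullet> sm" "h = (\<lambda>x. sign (w \<bullet> x - b))"
    using assms unfolding halfspaces2_def by blast
  then have "\<exists>p. fst p \<bullet> sp \<ge> snd p \<and> snd p > fst p \<bullet> sm \<and> h = (\<lambda>x. sign (fst p \<bullet> x - snd p))"
    by (intro exI[of _ "(w,b)"]) simp
  then show ?thesis unfolding rep_def by (rule someI_ex)
qed

lemma fv_props:
  assumes "h \<in> halfspaces2 sp sm"
  shows "fv sp sm h sp \<ge> 0" "fv sp sm h sm < 0" "h x = sign (fv sp sm h x)"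
    "fv sp sm h u - fv sp sm h v = fst (rep sp sm h) \<bullet> (u - v)"
proof -
  note r = rep_prop[OF assms]
  show "fv sp sm h sp \<ge> 0" "fv sp sm h sm < 0" using r unfolding fv_def by auto
  show "h x = sign (fv sp sm h x)" using r unfolding fv_def by metis
  show "fv sp sm h u - fv sp sm h v = fst (rep sp sm h) \<bullet> (u - v)"
    unfolding fv_def by (simp add: inner_diff_right)
qed

lemma h_pos: "h \<in> halfspaces2 sp sm \<Longrightarrow> h x = 1 \<longleftrightarrow> fv sp sm h x \<ge> 0"
  using fv_props(3)[of h sp sm x] by (simp add: sign_def)

lemma h_neg: "h \<in> halfspaces2 sp sm \<Longrightarrow> h x = -1 \<longleftrightarrow> fv sp sm h x < 0"
  using fv_props(3)[of h sp sm x] by (simp add: sign_def)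

lemma lex_cases: "a \<noteq> c \<Longrightarrow> lexless a c \<or> lexless c a"
  unfolding lexless_def using vec2_eq[of a c] by linarith

lemma sig_eval:
  assumes "lexless a c"
  shows "sig sp sm g {(a,ya),(c,yc)} =
     (if fv sp sm g a < fv sp sm g c then 0 else if fv sp sm g c < fv sp sm g a then 1 else 2)"
proof -
  have nl: "\<not> lexless c a" "\<not> lexless a a" "\<not> lexless c c" using assms unfolding lexless_def by auto
  show ?thesis unfolding sig_def using assms nl by auto
qed

lemma sig_order:
  assumes "a \<noteq> c" "sig sp sm h' {(a,ya),(c,yc)} = sig sp sm h {(a,ya),(c,yc)}"
  shows "fv sp sm h a \<le> fv sp sm h c \<Longrightarrow> fv sp sm h' a \<le> fv sp sm h' c"
    and "fv sp sm h c \<le> fv sp sm h a \<Longrightarrow> fv sp sm h' c \<le> fv sp sm h' a"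
proof -
  have "{(a,ya),(c,yc)} = {(c,yc),(a,ya)}" by auto
  then have e2: "sig sp sm h' {(c,yc),(a,ya)} = sig sp sm h {(c,yc),(a,ya)}" using assms(2) by simp
  have "(fv sp sm h a \<le> fv sp sm h c \<longrightarrow> fv sp sm h' a \<le> fv sp sm h' c) \<and>
        (fv sp sm h c \<le> fv sp sm h a \<longrightarrow> fv sp sm h' c \<le> fv sp sm h' a)"
  proof (cases "lexless a c")
    case True
    show ?thesis using assms(2) unfolding sig_eval[OF True] by (auto split: if_splits)
  next
    case False
    then have "lexless c a" using lex_cases assms(1) by blast
    then show ?thesis using e2 unfolding sig_eval[OF \<open>lexless c a\<close>] by (auto split: if_splits)
  qed
  then show "fv sp sm h a \<le> fv sp sm h c \<Longrightarrow> fv sp sm h' a \<le> fv sp sm h' c"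
    and "fv sp sm h c \<le> fv sp sm h a \<Longrightarrow> fv sp sm h' c \<le> fv sp sm h' a" by auto
qed

lemma lemT_pos:
  fixes \<alpha> \<gamma> fa fc fs fx :: real
  assumes "\<alpha>\<ge>0" "\<gamma>\<ge>0" "\<alpha>+\<gamma>\<ge>1" "fa\<ge>0" "fc\<ge>0" "fs<0" "fx - fs = \<alpha>*(fa-fs)+\<gamma>*(fc-fs)"
  shows "fx \<ge> 0"
proof -
  have "fx = \<alpha>*fa + \<gamma>*fc + (1-\<alpha>-\<gamma>)*fs" using assms(7) by (simp add: algebra_simps)
  moreover have "\<alpha>*fa \<ge> 0" "\<gamma>*fc \<ge> 0" using assms by simp_all
  moreover have "(1-\<alpha>-\<gamma>)*fs \<ge> 0" using assms by (intro mult_nonpos_nonpos) simp_all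
  ultimately show ?thesis by linarith
qed

lemma lemT_neg:
  fixes \<alpha> \<gamma> fa fc fs fx :: real
  assumes "\<alpha>\<ge>0" "\<gamma>\<ge>0" "\<alpha>+\<gamma>\<ge>1" "fa<0" "fc<0" "fs\<ge>0" "fx - fs = \<alpha>*(fa-fs)+\<gamma>*(fc-fs)"
  shows "fx < 0"
proof -
  define m where "m = max fa fc"
  have m: "m < 0" "fa \<le> m" "fc \<le> m" using assms unfolding m_def by auto
  have "fx = \<alpha>*fa + \<gamma>*fc + (1-\<alpha>-\<gamma>)*fs" using assms(7) by (simp add: algebra_simps)
  moreover have "\<alpha>*fa \<le> \<alpha>*m" "\<gamma>*fc \<le> \<gamma>*m" using assms m by (simp_all add: mult_left_mono)
  moreover have "(\<alpha>+\<gamma>)*m \<le> 1*m" using assms m by (intro mult_right_mono_neg) simp_all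
  moreover have "(1-\<alpha>-\<gamma>)*fs \<le> 0" using assms by (intro mult_nonpos_nonneg) simp_all
  ultimately show ?thesis using m by (simp add: algebra_simps)
qed

lemma lemC_pos:
  fixes \<beta> \<mu> fa fc fs fx :: real
  assumes "\<beta>\<ge>0" "\<mu>\<ge>0" "fa\<ge>0" "fs<0" "fa \<ge> fc" "fx - fa = \<beta>*(fa-fs)+\<mu>*(fa-fc)"
  shows "fx \<ge> 0"
proof -
  have "\<beta>*(fa-fs) \<ge> 0" "\<mu>*(fa-fc) \<ge> 0" using assms by simp_all
  then show ?thesis using assms by linarith
qed

lemma lemC_neg:
  fixes \<beta> \<mu> fa fc fs fx :: real
  assumes "\<beta>\<ge>0" "\<mu>\<ge>0" "fa<0" "fs\<ge>0" "fa \<le> fc" "fx - fa = \<beta>*(fa-fs)+\<mu>*(fa-fc)"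
  shows "fx < 0"
proof -
  have "\<beta>*(fa-fs) \<le> 0" "\<mu>*(fa-fc) \<le> 0" using assms by (simp_all add: mult_nonneg_nonpos)
  then show ?thesis using assms by linarith
qed



lemma cert_ok:
  assumes h: "h \<in> halfspaces2 sp sm" and h': "h' \<in> halfspaces2 sp sm"
    and cs: "(l = 1 \<and> s = sm \<and> w0 = fst (rep sp sm h)) \<or> (l = -1 \<and> s = sp \<and> w0 = - fst (rep sp sm h))"
    and ha: "h' a = l" and hc: "h' c = l" and ac: "a \<noteq> c"
    and sg: "sig sp sm h' {(a,l),(c,l)} = sig sp sm h {(a,l),(c,l)}"
    and cert: "certT s x a c \<or> certC w0 s x a c"
  shows "h' x = l"
proof -
  define F where "F = fv sp sm h'"
  define W' where "W' = fst (rep sp sm h')"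
  have Fd: "F u - F v = W' \<bullet> (u - v)" for u v unfolding F_def W'_def by (rule fv_props(4)[OF h'])
  have Fsp: "F sp \<ge> 0" and Fsm: "F sm < 0" unfolding F_def using fv_props[OF h'] by auto
  have hd: "fv sp sm h u - fv sp sm h v = fst (rep sp sm h) \<bullet> (u - v)" for u v by (rule fv_props(4)[OF h])
  show ?thesis
  proof (cases "certT s x a c")
    case True
    then obtain \<alpha> \<gamma> where ag: "\<alpha>\<ge>0" "\<gamma>\<ge>0" "\<alpha>+\<gamma>\<ge>1" "x - s = \<alpha> *\<^sub>R (a - s) + \<gamma> *\<^sub>R (c - s)"
      unfolding certT_def by blast
    have eq: "F x - F s = \<alpha>*(F a - F s) + \<gamma>*(F c - F s)"
      unfolding Fd ag(4) by (simp add: inner_add_right)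
    show ?thesis using cs
    proof
      assume c1: "l = 1 \<and> s = sm \<and> w0 = fst (rep sp sm h)"
      then have "F a \<ge> 0" "F c \<ge> 0" using ha hc h_pos[OF h'] unfolding F_def by auto
      then have "F x \<ge> 0" using lemT_pos[OF ag(1-3) _ _ _ eq] Fsm c1 by auto
      then show ?thesis using c1 h_pos[OF h'] unfolding F_def by auto
    next
      assume c1: "l = -1 \<and> s = sp \<and> w0 = - fst (rep sp sm h)"
      then have "F a < 0" "F c < 0" using ha hc h_neg[OF h'] unfolding F_def by auto
      then have "F x < 0" using lemT_neg[OF ag(1-3) _ _ _ eq] Fsp c1 by auto
      then show ?thesis using c1 h_neg[OF h'] unfolding F_def by auto
    qed
  next
    case False
    then have "certC w0 s x a c" using cert by blast
    then obtain \<beta> \<mu> where bm: "\<beta>\<ge>0" "\<mu>\<ge>0" "w0 \<bullet> (a - c) \<ge> 0" "x - a = \<beta> *\<^sub>R (a - s) + \<mu> *\<^sub>R (a - c)"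
      unfolding certC_def by blast
    have eq: "F x - F a = \<beta>*(F a - F s) + \<mu>*(F a - F c)"
      unfolding Fd bm(4) by (simp add: inner_add_right)
    show ?thesis using cs
    proof
      assume c1: "l = 1 \<and> s = sm \<and> w0 = fst (rep sp sm h)"
      then have "F a \<ge> 0" using ha h_pos[OF h'] unfolding F_def by auto
      have "fv sp sm h c \<le> fv sp sm h a" using bm(3) c1 hd[of a c] by simp
      then have "F c \<le> F a" using sig_order(2)[OF ac sg] unfolding F_def by blast
      then have "F x \<ge> 0" using lemC_pos[OF bm(1,2) \<open>F a \<ge> 0\<close> _ _ eq] Fsm c1 by auto
      then show ?thesis using c1 h_pos[OF h'] unfolding F_def by auto
    next
      assume c1: "l = -1 \<and> s = sp \<and> w0 = - fst (rep sp sm h)"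
      then have "F a < 0" using ha h_neg[OF h'] unfolding F_def by auto
      have "fv sp sm h a \<le> fv sp sm h c" using bm(3) c1 hd[of a c] by (simp add: inner_minus_left)
      then have "F a \<le> F c" using sig_order(1)[OF ac sg] unfolding F_def by blast
      then have "F x < 0" using lemC_neg[OF bm(1,2) \<open>F a < 0\<close> _ _ eq] Fsp c1 by auto
      then show ?thesis using c1 h_neg[OF h'] unfolding F_def by auto
    qed
  qed
qed



theorem lemmaD1:
  fixes sp sm :: "real^2"
  assumes "sp \<noteq> sm"
  shows "has_certificate_dimension (halfspaces2 sp sm) UNIV 3 7 3"
proof -
  let ?C = "halfspaces2 sp sm"
  have B: "\<forall>h\<in>?C. \<forall>S. S \<subseteq> labeled_space UNIV \<and> finite S \<and> card S = 7 \<and> labeled_by h S \<longrightarrow>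
           (\<exists>U. U \<subseteq> S \<and> card U = 3 \<and>
              (\<exists>(x, y)\<in>U. \<forall>h'\<in>version_space ?C (S - {(x, y)}).
                  sig sp sm h' (U - {(x, y)}) = sig sp sm h (U - {(x, y)}) \<longrightarrow> h' x = h x \<and> h x = y))"
  proof (intro ballI allI impI)
    fix h S
    assume h: "h \<in> ?C" and S: "S \<subseteq> labeled_space UNIV \<and> finite S \<and> card S = 7 \<and> labeled_by h S"
    define W where "W = fst (rep sp sm h)"
    have finS: "finite S" using S by blast
    have lab: "y = h x" if "(x, y) \<in> S" for x y using S that unfolding labeled_by_def by blast
    have key: "\<exists>U. U \<subseteq> S \<and> card U = 3 \<and>
              (\<exists>(x, y)\<in>U. \<forall>h'\<in>version_space ?C (S - {(x, y)}).
                  sig sp sm h' (U - {(x, y)}) = sig sp sm h (U - {(x, y)}) \<longrightarrow> h' x = h x \<and> h x = y)"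
      if cs: "(l = 1 \<and> s = sm \<and> w0 = W) \<or> (l = -1 \<and> s = sp \<and> w0 = - W)"
        and c4: "card {p\<in>S. snd p = l} \<ge> 4" for l s w0
    proof -
      obtain T where T: "T \<subseteq> {p\<in>S. snd p = l}" "card T = 4"
        using obtain_subset_with_card_n[OF c4] by blast
      define P where "P = fst ` T"
      have injT: "inj_on fst T"
      proof (rule inj_onI)
        fix p q assume "p \<in> T" "q \<in> T" "fst p = fst q"
        then have "snd p = snd q" using T(1) by auto
        then show "p = q" using \<open>fst p = fst q\<close> by (simp add: prod_eq_iff)
      qed
      have cP: "card P = 4" unfolding P_def using card_image[OF injT] T(2) by simp
      have memS: "(q, l) \<in> S" if qP: "q \<in> P" for q
      proof -
        obtain p where "p \<in> T" "q = fst p" using qP P_def by blast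
        then show ?thesis using T(1) by (metis (mono_tags, lifting) mem_Collect_eq prod.collapse subsetD)
      qed
      have hq: "h q = l" if "q \<in> P" for q using lab[OF memS[OF that]] by simp
      have hd: "fv sp sm h u - fv sp sm h v = W \<bullet> (u - v)" for u v
        unfolding W_def by (rule fv_props(4)[OF h])
      have pos: "\<forall>q\<in>P. w0 \<bullet> (q - s) > 0"
      proof
        fix q assume q: "q \<in> P"
        show "w0 \<bullet> (q - s) > 0" using cs
        proof
          assume c1: "l = 1 \<and> s = sm \<and> w0 = W"
          have "fv sp sm h q \<ge> 0" using hq[OF q] c1 h_pos[OF h] by auto
          then show ?thesis using fv_props(2)[OF h] hd[of q sm] c1 by simp
        next
          assume c1: "l = -1 \<and> s = sp \<and> w0 = - W"
          have "fv sp sm h q < 0" using hq[OF q] c1 h_neg[OF h] by auto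
          then show ?thesis using fv_props(1)[OF h] hd[of q sp] c1 by (simp add: inner_minus_left)
        qed
      qed
      obtain x a c where xac: "x\<in>P" "a\<in>P" "c\<in>P" "x\<noteq>a" "x\<noteq>c" "a\<noteq>c"
          and cert: "certT s x a c \<or> certC w0 s x a c"
        using core[OF cP pos] by blast
      define U where "U = {(x,l),(a,l),(c,l)}"
      have US: "U \<subseteq> S" unfolding U_def using memS xac by auto
      have cU: "card U = 3" unfolding U_def using xac by auto
      have Ux: "U - {(x,l)} = {(a,l),(c,l)}" unfolding U_def using xac by auto
      have "\<forall>h'\<in>version_space ?C (S - {(x, l)}).
                  sig sp sm h' (U - {(x, l)}) = sig sp sm h (U - {(x, l)}) \<longrightarrow> h' x = h x \<and> h x = l"
      proof (intro ballI impI)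
        fix h' assume vs: "h' \<in> version_space ?C (S - {(x, l)})"
          and sg: "sig sp sm h' (U - {(x, l)}) = sig sp sm h (U - {(x, l)})"
        have h': "h' \<in> ?C" using vs unfolding version_space_def mem_Collect_eq by (rule conjunct1)
        have ain: "(a, l) \<in> S - {(x, l)}" and cin: "(c, l) \<in> S - {(x, l)}" using memS xac by auto
        have all: "\<forall>(z, y)\<in>S - {(x, l)}. h' z = y" using vs unfolding version_space_def mem_Collect_eq by (rule conjunct2)
        have ha: "h' a = l" using bspec[OF all ain] by simp
        have hc: "h' c = l" using bspec[OF all cin] by simp
        have "h' x = l"
          using cert_ok[OF h h' _ ha hc xac(6) sg[unfolded Ux] cert] cs unfolding W_def by blast
        then show "h' x = h x \<and> h x = l" using hq xac by auto
      qed
      then show ?thesis using US cU unfolding U_def by blast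
    qed
    have Ssub: "S \<subseteq> UNIV \<times> {1, -1}" using S unfolding labeled_space_def by blast
    have un: "S = {p\<in>S. snd p = 1} \<union> {p\<in>S. snd p = -1}" using Ssub by auto
    have cu: "card ({p\<in>S. snd p = 1} \<union> {p\<in>S. snd p = -1}) = card {p\<in>S. snd p = 1} + card {p\<in>S. snd p = -1}"
      by (rule card_Un_disjoint) (use finS in auto)
    have "card {p\<in>S. snd p = 1} + card {p\<in>S. snd p = -1} = 7"
      using cu un S by metis
    then have "card {p\<in>S. snd p = 1} \<ge> 4 \<or> card {p\<in>S. snd p = -1} \<ge> 4" by linarith
    then show "\<exists>U. U \<subseteq> S \<and> card U = 3 \<and>
              (\<exists>(x, y)\<in>U. \<forall>h'\<in>version_space ?C (S - {(x, y)}).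
                  sig sp sm h' (U - {(x, y)}) = sig sp sm h (U - {(x, y)}) \<longrightarrow> h' x = h x \<and> h x = y)"
      using key by blast
  qed
  have A: "\<forall>h\<in>?C. \<forall>U. U \<subseteq> labeled_space UNIV \<and> finite U \<and> card U = 3 - 1 \<longrightarrow> sig sp sm h U < 3"
    by (simp add: sig_def)
  show ?thesis unfolding has_certificate_dimension_def
    using A B by (intro conjI exI[of _ "sig sp sm"]) simp_all
qed


end
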